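(* For a positive integer $c$ let $m_c=\frac{(2c)!}{2^c\,c!}\cdot 2c$, and for a positive integer $n$ let $C_n=\frac{1}{n+1}\binom{2n}{n}$ be the $n$th Catalan number. Then for all sufficiently large $n$ and every positive integer $c$ with $c+2\le \frac{\ln n}{4\ln\ln n}$, one has $m_c^{2n}\,C_n^{\,c} < (2n-1)!! = \frac{(2n)!}{n!\,2^n}$.
   Context: Here $\ln$ denotes the natural logarithm and $(2n-1)!!=1\cdot 3\cdot 5\cdots(2n-1)$. *)

theory Defs
  imports "HOL-Analysis.Analysis"
begin

definition m_const :: "nat \<Rightarrow> real" where
  "m_const c = fact (2*c) / (2^c * fact c) * (2 * real c)"

definition catalan :: "nat \<Rightarrow> real" where
  "catalan n = real (2*n choose n) / (real n + 1)"

definition odd_double_fact :: "nat \<Rightarrow> real" where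
  "odd_double_fact n = (\<Prod>i=1..n. real (2*i - 1))"

end

theory Submission
  imports Defs
begin

lemma m_bound:
  assumes "c \<ge> 1"
  shows "m_const c \<le> (2 * real c) ^ (c+1)"
proof -
  have d: "fact c dvd (fact (2*c) :: nat)" by (rule fact_dvd) simp
  have "fact (2*c) div fact (2*c - c) \<le> (2*c::nat) ^ c"
    by (rule fact_div_fact_le_pow) simp
  hence h: "(fact (2*c) :: nat) div fact c \<le> (2*c) ^ c" by simp
  have "(fact (2*c) :: nat) = (fact (2*c) div fact c) * fact c" using d by simp
  also have "\<dots> \<le> (2*c)^c * fact c" using h by simp
  finally have "(fact (2*c) :: nat) \<le> (2*c)^c * fact c" .
  hence "real (fact (2*c)) \<le> real ((2*c)^c * fact c)" by (rule of_nat_mono)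
  hence f: "(fact (2*c) :: real) \<le> (2*real c)^c * fact c" by simp
  have "fact (2*c) / (2^c * fact c) \<le> fact (2*c) / (fact c :: real)"
  proof (rule divide_left_mono)
    have "(1::real) \<le> 2^c" by simp
    hence "1 * fact c \<le> (2::real)^c * fact c" by (intro mult_right_mono) auto
    thus "fact c \<le> (2::real)^c * fact c" by simp
    show "0 \<le> (fact (2*c) :: real)" by simp
    show "0 < (2::real)^c * fact c * fact c" by simp
  qed
  also have "\<dots> \<le> (2*real c)^c" using f by (simp add: divide_le_eq)
  finally have "fact (2*c) / (2^c * fact c) * (2 * real c) \<le> (2*real c)^c * (2 * real c)"
    by (rule mult_right_mono) simp
  moreover have e: "(2*real c)^(c+1) = (2*real c)^c * (2*real c)" by simp
  ultimately show ?thesis unfolding m_const_def by (simp only:)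
qed

lemma catalan_bound: "catalan n \<le> 4 ^ n"
proof -
  have "real (2*n choose n) \<le> 2^(2*n)"
    by (metis binomial_le_pow2 of_nat_le_iff of_nat_numeral of_nat_power)
  also have "(2::real)^(2*n) = 4^n" by (simp add: power_mult)
  finally have a: "real (2*n choose n) \<le> 4^n" .
  have "real (2*n choose n) / (real n + 1) \<le> real (2*n choose n)"
    by (simp add: divide_le_eq algebra_simps)
  note b = this
  show ?thesis unfolding catalan_def by (rule order_trans[OF b a])
qed

lemma odf_bound: "fact n \<le> odd_double_fact n"
proof -
  have "(fact n :: real) = (\<Prod>i=1..n. real i)" by (simp add: fact_prod)
  also have "\<dots> \<le> (\<Prod>i=1..n. real (2*i - 1))"
    by (rule prod_mono) auto
  finally show ?thesis by (simp add: odd_double_fact_def)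
qed

lemma fact_exp_bound: "real n ^ n / fact n \<le> exp (real n)"
  using summable_exp_generic[of "real n"] sum_le_suminf[of "\<lambda>k. real n ^ k / fact k" "{n}"]
  by (auto simp: exp_def divide_inverse ac_simps)

lemma pow_eq: "((x::real)^(c+1))^(2*n) * (y^n)^c = (x^(2*(c+1)) * y^c)^n"
proof -
  have "((x::real)^(c+1))^(2*n) * (y^n)^c = x^((c+1)*(2*n)) * y^(n*c)"
    by (simp only: power_mult)
  also have "\<dots> = x^((2*(c+1))*n) * y^(c*n)" by (simp only: mult_ac)
  also have "\<dots> = (x^(2*(c+1)) * y^c)^n" by (simp only: power_mult power_mult_distrib)
  finally show ?thesis .
qed

theorem mainTheorem3:
  shows "\<forall>\<^sub>F n in at_top. \<forall>c::nat. c \<ge> 1 \<and>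
            real c + 2 \<le> ln (real n) / (4 * ln (ln (real n))) \<longrightarrow>
            m_const c ^ (2*n) * catalan n ^ c < odd_double_fact n"
proof -
  define N where "N = nat \<lceil>exp (exp (2::real))\<rceil>"
  show ?thesis unfolding eventually_at_top_linorder
  proof (rule exI[of _ N], intro allI impI)
    fix n c :: nat
    assume nN: "n \<ge> N"
    assume cc: "c \<ge> 1 \<and> real c + 2 \<le> ln (real n) / (4 * ln (ln (real n)))"
    have c1: "c \<ge> 1" and cL: "real c + 2 \<le> ln (real n) / (4 * ln (ln (real n)))" using cc by auto
    have n1: "real n \<ge> exp (exp 2)"
    proof -
      have "real N \<le> real n" using nN by simp
      thus ?thesis using real_nat_ceiling_ge[of "exp (exp (2::real))"] unfolding N_def by linarith
    qed
    have npos: "real n > 0" using n1 exp_gt_zero[of "exp 2"] by linarith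
    have L: "ln (real n) \<ge> exp 2" using n1 npos by (simp add: ln_ge_iff)
    have Lpos: "ln (real n) > 0" using L exp_gt_zero[of 2] by linarith
    have l2: "ln (ln (real n)) \<ge> 2" using L Lpos by (simp add: ln_ge_iff)
    define Ln where "Ln = ln (real n)"
    define l where "l = ln Ln"
    have l2': "l \<ge> 2" using l2 by (simp add: l_def Ln_def)
    have key: "(real c + 2) * (4 * l) \<le> Ln"
      using cL l2' by (simp add: pos_le_divide_eq l_def Ln_def)
    have "(real c + 2) * (4 * 2) \<le> (real c + 2) * (4 * l)" using l2' by (intro mult_left_mono) auto
    moreover have "(real c + 2) * (4 * 2) = 8 * real c + 16" by (simp add: algebra_simps)
    ultimately have c2L: "2 * real c \<le> Ln" using key by linarith
    have cpos: "2 * real c > 0" using c1 by simp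
    have lnc: "ln (2 * real c) \<le> l" unfolding l_def using c2L cpos by simp
    have lnc0: "ln (2 * real c) \<ge> 0" using c1 by simp
    have ln4: "ln (4::real) < 2"
    proof -
      have "ln (4::real) = ln (2^2)" by simp
      also have "\<dots> = 2 * ln 2" by (subst ln_realpow) auto
      finally show ?thesis using ln_2_less_1 by linarith
    qed
    define B where "B = (2*real c)^(2*(c+1)) * 4^c"
    have Bpos: "B > 0" using cpos by (simp add: B_def)
    have lnB: "ln B = real (2*(c+1)) * ln (2 * real c) + real c * ln 4"
    proof -
      have "ln B = ln ((2*real c)^(2*(c+1))) + ln ((4::real)^c)"
        unfolding B_def using cpos by (intro ln_mult_pos) auto
      also have "\<dots> = real (2*(c+1)) * ln (2 * real c) + real c * ln 4"
        by (simp only: ln_realpow)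
      finally show ?thesis .
    qed
    have "real (2*(c+1)) * ln (2 * real c) \<le> real (2*(c+1)) * l"
      using lnc by (rule mult_left_mono) simp
    moreover have "real c * ln 4 \<le> real c * 2" using ln4 by (intro mult_left_mono) auto
    moreover have "real c * 2 \<le> real c * l" using l2' by (intro mult_left_mono) auto
    ultimately have "ln B \<le> 2 * (real c * l) + 2 * l + real c * l" unfolding lnB by (simp add: algebra_simps)
    also have "\<dots> < Ln - 1"
    proof -
      have cl: "0 \<le> real c * l" using l2' by simp
      have eq: "(real c + 2)*(4*l) = 4*(real c*l) + 8*l" by (simp add: algebra_simps)
      show ?thesis using key eq cl l2' by linarith
    qed
    finally have "ln B < ln (real n) - 1" by (simp add: Ln_def)
    hence "ln B < ln (real n / exp 1)" using npos by (simp add: ln_div)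
    hence Blt: "B < real n / exp 1" using Bpos npos by simp
    have m0: "m_const c \<ge> 0" by (simp add: m_const_def)
    have cat0: "catalan n \<ge> 0" by (simp add: catalan_def)
    have "m_const c ^ (2*n) * catalan n ^ c \<le> ((2 * real c) ^ (c+1)) ^ (2*n) * (4^n)^c"
      by (intro mult_mono power_mono m_bound catalan_bound c1 m0 cat0 zero_le_power) auto
    also have "\<dots> = B ^ n"
      unfolding B_def by (rule pow_eq)
    also have "\<dots> < (real n / exp 1) ^ n"
      using Blt Bpos npos by (intro power_strict_mono) auto
    also have "\<dots> = real n ^ n / exp (real n)"
    proof -
      have "exp (real n) = exp 1 ^ n" using exp_of_nat_mult[of n "1::real"] by simp
      thus ?thesis by (simp only: power_divide)
    qed
    also have "\<dots> \<le> fact n"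
      using fact_exp_bound[of n] by (simp add: divide_le_eq mult.commute)
    also have "\<dots> \<le> odd_double_fact n" by (rule odf_bound)
    finally show "m_const c ^ (2*n) * catalan n ^ c < odd_double_fact n" .
  qed
qed

end
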